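(* Let $\mathbf{X}\subseteq\mathbb{N}^d$ and $\mathbf{L}=\mathbf{B}+\mathbb{N}(\mathbf{F})$ hybridlinear with $\mathbf{X}\trianglelefteq\mathbf{L}$, and let $\mathbf{S}\subseteq\mathbb{N}^d$ be semilinear with $\mathbf{X}\subseteq\mathbf{S}$. Then there exists $\mathbf{p}\in\mathbb{N}(\mathbf{F})$ such that $\mathbf{p}+\mathbf{L}\subseteq\mathbf{S}$.
   Context: $\mathbb{N}(\mathbf{F})$ is the set of finite $\mathbb{N}$-linear combinations of $\mathbf{F}$; for finite $\mathbf{F}$, $\mathbb{N}_{\ge1}(\mathbf{F})=\{\sum_{\mathbf{f}\in\mathbf{F}}\lambda_{\mathbf{f}}\mathbf{f}\mid\lambda_{\mathbf{f}}\ge1\}$. Hybridlinear: $\mathbf{B}+\mathbb{N}(\mathbf{F})$ with $\mathbf{B},\mathbf{F}\subseteq\mathbb{N}^d$ finite; semilinear: finite union of hybridlinear sets. $\mathbf{X}\trianglelefteq\mathbf{L}$ (asymptotic overapproximation) means $\mathbf{X}\subseteq\mathbf{L}$ and for every $\mathbf{x}\in\mathbf{L}$ and $\mathbf{w}\in\mathbb{N}_{\ge1}(\mathbf{F})$ there is $N\in\mathbb{N}$ with $\mathbf{x}+\mathbb{N}_{\ge N}\mathbf{w}\subseteq\mathbf{X}$. *)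

theory Defs
  imports "HOL-Analysis.Analysis"
begin

definition vsmul :: "nat \<Rightarrow> nat ^ 'd \<Rightarrow> nat ^ 'd" where
  "vsmul n v = (\<chi> i. n * v $ i)"

definition nat_comb :: "(nat ^ 'd) set \<Rightarrow> (nat ^ 'd) set" where
  "nat_comb F = {\<Sum>f\<in>G. vsmul (c f) f | G c. finite G \<and> G \<subseteq> F}"

definition nat_comb_ge1 :: "(nat ^ 'd) set \<Rightarrow> (nat ^ 'd) set" where
  "nat_comb_ge1 F = {\<Sum>f\<in>F. vsmul (c f) f | c. \<forall>f\<in>F. c f \<ge> 1}"

definition hybridlinear_set :: "(nat ^ 'd) set \<Rightarrow> (nat ^ 'd) set \<Rightarrow> (nat ^ 'd) set" where
  "hybridlinear_set B F = {b + p | b p. b \<in> B \<and> p \<in> nat_comb F}"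

definition hybridlinear :: "(nat ^ 'd) set \<Rightarrow> bool" where
  "hybridlinear L \<longleftrightarrow> (\<exists>B F. finite B \<and> finite F \<and> L = hybridlinear_set B F)"

definition semilinear :: "(nat ^ 'd) set \<Rightarrow> bool" where
  "semilinear S \<longleftrightarrow> (\<exists>\<L>. finite \<L> \<and> (\<forall>L\<in>\<L>. hybridlinear L) \<and> S = \<Union>\<L>)"

text \<open>\<open>X \<unlhd> L\<close> where \<open>L = B + \<nat>(F)\<close> (depends on the presentation via \<open>F\<close>).\<close>
definition asymp_overapprox :: "(nat ^ 'd) set \<Rightarrow> (nat ^ 'd) set \<Rightarrow> (nat ^ 'd) set \<Rightarrow> bool" where
  "asymp_overapprox X B F \<longleftrightarrow>
     X \<subseteq> hybridlinear_set B F \<and>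
     (\<forall>x\<in>hybridlinear_set B F. \<forall>w\<in>nat_comb_ge1 F.
        \<exists>N::nat. \<forall>n\<ge>N. x + vsmul n w \<in> X)"

end

theory Submission
  imports Defs "HOL-Decision_Procs.Cooper" "HOL-Library.Infinite_Set"
begin


hide_const (open) T F E A C Not And Or Imp Iff Lt Le Gt Ge Eq NEq Dvd NDvd Closed NClosed Bound CN Neg Add Sub Mul


definition ray :: "int list \<Rightarrow> int list \<Rightarrow> nat \<Rightarrow> int list" where
  "ray x y n = map (\<lambda>j. x!j + int n * (y!j - x!j)) [0..<length x]"

lemma nth_beyond: "length xs \<le> j \<Longrightarrow> xs ! j = [] ! (j - length xs)"
  by (induction xs arbitrary: j) (auto simp: nth_Cons split: nat.splits)

lemma ray_nth:
  assumes "length x = length y"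
  shows "ray x y n ! j = x!j + int n * (y!j - x!j)"
proof (cases "j < length x")
  case True thus ?thesis by (simp add: ray_def)
next
  case False
  have l: "length (ray x y n) = length x" by (simp add: ray_def)
  have "ray x y n ! j = [] ! (j - length x)" using nth_beyond[of "ray x y n" j] False l by simp
  moreover have "x ! j = [] ! (j - length x)" using nth_beyond[of x j] False by simp
  moreover have "y ! j = [] ! (j - length x)" using nth_beyond[of y j] False assms by simp
  ultimately show ?thesis by simp
qed

lemma Inum_ray:
  assumes "length x = length y"
  shows "Inum (ray x y n) t = Inum x t + int n * (Inum y t - Inum x t)"
  apply (induction t)
  apply (simp_all add: ray_nth[OF assms])
  apply (simp_all add: algebra_simps)
  done

definition Good :: "fm \<Rightarrow> (nat \<Rightarrow> int list) \<Rightarrow> bool" where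
  "Good p e \<longleftrightarrow> (\<exists>v I. (\<forall>i\<ge>I. Ifm [] (e i) p = v) \<and>
      (\<forall>i j. I \<le> i \<longrightarrow> i < j \<longrightarrow> (\<exists>N. \<forall>n\<ge>N. Ifm [] (ray (e i) (e j) n) p = v)))"

lemma Good_subseq:
  assumes "Good p e" "strict_mono r"
  shows "Good p (e \<circ> r)"
proof -
  obtain v I where h1: "\<forall>i\<ge>I. Ifm [] (e i) p = v"
    and h2: "\<forall>i j. I \<le> i \<longrightarrow> i < j \<longrightarrow> (\<exists>N. \<forall>n\<ge>N. Ifm [] (ray (e i) (e j) n) p = v)"
    using assms(1) unfolding Good_def by blast
  have s: "i \<le> r i" for i using seq_suble[OF assms(2)] .
  have c1: "\<forall>i\<ge>I. Ifm [] ((e \<circ> r) i) p = v" using h1 s by (metis comp_apply order_trans)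
  have c2: "\<forall>i j. I \<le> i \<longrightarrow> i < j \<longrightarrow> (\<exists>N. \<forall>n\<ge>N. Ifm [] (ray ((e \<circ> r) i) ((e \<circ> r) j) n) p = v)"
  proof (intro allI impI)
    fix i j assume "I \<le> i" "i < j"
    hence "I \<le> r i" "r i < r j" using s[of i] assms(2) by (auto simp: strict_mono_def)
    thus "\<exists>N. \<forall>n\<ge>N. Ifm [] (ray ((e \<circ> r) i) ((e \<circ> r) j) n) p = v" using h2 by simp
  qed
  show ?thesis unfolding Good_def using c1 c2 by blast
qed

lemma Good_un:
  assumes "Good p e" "\<And>bs. Ifm [] bs q = h (Ifm [] bs p)"
  shows "Good q e"
proof -
  obtain v I where h1: "\<forall>i\<ge>I. Ifm [] (e i) p = v"
    and h2: "\<forall>i j. I \<le> i \<longrightarrow> i < j \<longrightarrow> (\<exists>N. \<forall>n\<ge>N. Ifm [] (ray (e i) (e j) n) p = v)"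
    using assms(1) unfolding Good_def by blast
  have c1: "\<forall>i\<ge>I. Ifm [] (e i) q = h v" using h1 assms(2) by simp
  have c2: "\<forall>i j. I \<le> i \<longrightarrow> i < j \<longrightarrow> (\<exists>N. \<forall>n\<ge>N. Ifm [] (ray (e i) (e j) n) q = h v)"
  proof (intro allI impI)
    fix i j assume a: "I \<le> i" "i < j"
    obtain N where N: "\<forall>n\<ge>N. Ifm [] (ray (e i) (e j) n) p = v" using h2 a by blast
    show "\<exists>N. \<forall>n\<ge>N. Ifm [] (ray (e i) (e j) n) q = h v"
      apply (rule exI[of _ N]) using N assms(2) by simp
  qed
  show ?thesis unfolding Good_def using c1 c2 by blast
qed

lemma Good_bin:
  assumes "Good p e" "Good q e" "\<And>bs. Ifm [] bs R = h (Ifm [] bs p) (Ifm [] bs q)"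
  shows "Good R e"
proof -
  obtain v I where h1: "\<forall>i\<ge>I. Ifm [] (e i) p = v"
    and h2: "\<forall>i j. I \<le> i \<longrightarrow> i < j \<longrightarrow> (\<exists>N. \<forall>n\<ge>N. Ifm [] (ray (e i) (e j) n) p = v)"
    using assms(1) unfolding Good_def by blast
  obtain v' I' where h1': "\<forall>i\<ge>I'. Ifm [] (e i) q = v'"
    and h2': "\<forall>i j. I' \<le> i \<longrightarrow> i < j \<longrightarrow> (\<exists>N. \<forall>n\<ge>N. Ifm [] (ray (e i) (e j) n) q = v')"
    using assms(2) unfolding Good_def by blast
  have c1: "\<forall>i\<ge>max I I'. Ifm [] (e i) R = h v v'" using h1 h1' assms(3) by simp
  have c2: "\<forall>i j. max I I' \<le> i \<longrightarrow> i < j \<longrightarrow> (\<exists>N. \<forall>n\<ge>N. Ifm [] (ray (e i) (e j) n) R = h v v')"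
  proof (intro allI impI)
    fix i j assume a: "max I I' \<le> i" "i < j"
    have "I \<le> i" "I' \<le> i" using a by auto
    obtain N where N: "\<forall>n\<ge>N. Ifm [] (ray (e i) (e j) n) p = v" using h2 \<open>I \<le> i\<close> a(2) by blast
    obtain N' where N': "\<forall>n\<ge>N'. Ifm [] (ray (e i) (e j) n) q = v'" using h2' \<open>I' \<le> i\<close> a(2) by blast
    show "\<exists>N. \<forall>n\<ge>N. Ifm [] (ray (e i) (e j) n) R = h v v'"
      apply (rule exI[of _ "max N N'"]) using N N' assms(3) by simp
  qed
  show ?thesis unfolding Good_def using c1 c2 by blast
qed

lemma Good_const:
  assumes "\<And>bs. Ifm [] bs p = c"
  shows "Good p e"
  unfolding Good_def using assms by blast

lemma unb_extract:
  fixes a :: "nat \<Rightarrow> int"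
  assumes "\<forall>M. \<exists>i. a i > M"
  shows "\<exists>r::nat\<Rightarrow>nat. strict_mono r \<and> (\<forall>i j. i < j \<longrightarrow> a (r i) < a (r j))"
proof -
  define J where "J = {i. \<forall>j<i. a j < a i}"
  have "\<exists>n\<ge>m. n \<in> J" for m
  proof -
    define M where "M = Max (a ` {..m})"
    have ex: "\<exists>i. a i > M" using assms by blast
    define i0 where "i0 = (LEAST i. a i > M)"
    have a0: "a i0 > M" unfolding i0_def using ex by (rule LeastI_ex)
    have lt: "\<And>j. j < i0 \<Longrightarrow> a j \<le> M" unfolding i0_def using not_less_Least by fastforce
    have "i0 \<ge> m"
    proof (rule ccontr)
      assume "\<not> i0 \<ge> m"
      hence "a i0 \<le> M" unfolding M_def by (intro Max_ge) auto
      thus False using a0 by simp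
    qed
    moreover have "i0 \<in> J" unfolding J_def using lt a0 by force
    ultimately show ?thesis by blast
  qed
  hence "infinite J" using infinite_nat_iff_unbounded_le by blast
  then obtain r :: "nat \<Rightarrow> nat" where r: "strict_mono r" "\<forall>n. r n \<in> J" using infinite_enumerate by blast
  have "a (r i) < a (r j)" if "i < j" for i j
    using r that unfolding J_def strict_mono_def by blast
  thus ?thesis using r by blast
qed

lemma fin_extract:
  fixes a :: "nat \<Rightarrow> 'b"
  assumes "finite (range a)"
  shows "\<exists>r::nat\<Rightarrow>nat. strict_mono r \<and> (\<forall>i. a (r i) = a (r 0))"
proof -
  obtain y where "infinite (a -` {y})" using inf_img_fin_dom[OF assms] by blast
  then obtain r :: "nat \<Rightarrow> nat" where r: "strict_mono r" "\<forall>n. r n \<in> a -` {y}" using infinite_enumerate by blast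
  thus ?thesis by auto
qed

lemma int_extract:
  fixes a :: "nat \<Rightarrow> int"
  shows "\<exists>r::nat\<Rightarrow>nat. strict_mono r \<and> ((\<forall>i. a (r i) = a (r 0)) \<or> (\<forall>i j. i < j \<longrightarrow> a (r i) < a (r j))
     \<or> (\<forall>i j. i < j \<longrightarrow> a (r j) < a (r i)))"
proof (cases "\<forall>M. \<exists>i. a i > M")
  case True thus ?thesis using unb_extract by blast
next
  case False
  then obtain hi where hi: "\<And>i. a i \<le> hi" by (meson not_le)
  show ?thesis
  proof (cases "\<forall>M. \<exists>i. - a i > M")
    case True
    from unb_extract[OF True] show ?thesis by auto
  next
    case False
    then obtain lo where lo: "\<And>i. - a i \<le> lo" by (meson not_le)
    have "range a \<subseteq> {-lo..hi}" using hi lo by (auto simp: minus_le_iff)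
    hence "finite (range a)" by (rule finite_subset) simp
    thus ?thesis using fin_extract by blast
  qed
qed

lemma mod_extract:
  fixes a :: "nat \<Rightarrow> int" and d :: int
  assumes "d \<noteq> 0"
  shows "\<exists>r::nat\<Rightarrow>nat. strict_mono r \<and> (\<forall>i. a (r i) mod d = a (r 0) mod d)"
proof -
  have "a i mod d \<in> {-\<bar>d\<bar>..\<bar>d\<bar>}" for i
  proof (cases "d > 0")
    case True
    have "0 \<le> a i mod d" "a i mod d < d" using True by simp_all
    hence "-d \<le> a i mod d" "a i mod d \<le> d" using True by linarith+
    thus ?thesis using True by simp
  next
    case False hence "d < 0" using assms by simp
    have "a i mod d \<le> 0" "d < a i mod d" using \<open>d < 0\<close> by simp_all
    hence "d \<le> a i mod d" "a i mod d \<le> -d" using \<open>d < 0\<close> by linarith+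
    thus ?thesis using \<open>d < 0\<close> by simp
  qed
  hence "range (\<lambda>i. a i mod d) \<subseteq> {-\<bar>d\<bar>..\<bar>d\<bar>}" by auto
  hence "finite (range (\<lambda>i. a i mod d))" by (rule finite_subset) simp
  then obtain r :: "nat \<Rightarrow> nat" where r1: "strict_mono r" and r2: "\<forall>i. (\<lambda>i. a i mod d) (r i) = (\<lambda>i. a i mod d) (r 0)"
    using fin_extract by blast
  show ?thesis using r1 r2 by (intro exI[of _ r]) simp
qed




lemma strict_inc_bound:
  fixes b :: "nat \<Rightarrow> int"
  assumes "\<forall>i j. i<j \<longrightarrow> b i < b j"
  shows "b 0 + int i \<le> b i"
proof (induction i)
  case (Suc i) thus ?case using assms[rule_format, of i "Suc i"] by simp
qed simp

lemma strict_dec_bound: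
  fixes b :: "nat \<Rightarrow> int"
  assumes "\<forall>i j. i<j \<longrightarrow> b j < b i"
  shows "b i \<le> b 0 - int i"
proof (induction i)
  case (Suc i) thus ?case using assms[rule_format, of i "Suc i"] by simp
qed simp

lemma Good_cmp:
  assumes len: "\<forall>i. length (e i) = k"
    and P: "\<And>bs. Ifm [] bs p = P (Inum bs t)"
    and M1: "\<forall>x\<ge>M. P x = P M" and M2: "\<forall>x\<le> -M. P x = P (-M)"
  shows "\<exists>r::nat\<Rightarrow>nat. strict_mono r \<and> Good p (e \<circ> r)"
proof -
  define a where "a i = Inum (e i) t" for i
  obtain r :: "nat \<Rightarrow> nat" where r: "strict_mono r" and cs: "(\<forall>i. a (r i) = a (r 0)) \<or>
     (\<forall>i j. i<j \<longrightarrow> a (r i) < a (r j)) \<or> (\<forall>i j. i<j \<longrightarrow> a (r j) < a (r i))"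
    using int_extract[of a] by blast
  define b where "b i = a (r i)" for i
  have rayv: "Ifm [] (ray ((e\<circ>r) i) ((e\<circ>r) j) n) p = P (b i + int n * (b j - b i))" for i j n
    using P Inum_ray len by (simp add: b_def a_def)
  have seqv: "Ifm [] ((e\<circ>r) i) p = P (b i)" for i using P by (simp add: b_def a_def)
  from cs have "Good p (e \<circ> r)"
  proof (elim disjE)
    assume c: "\<forall>i. a (r i) = a (r 0)"
    have bc: "b i = b 0" for i using c[rule_format, of i] by (simp add: b_def)
    have c1: "\<forall>i\<ge>0. Ifm [] ((e\<circ>r) i) p = P (b 0)"
    proof (intro allI impI)
      fix i show "Ifm [] ((e\<circ>r) i) p = P (b 0)" using seqv[of i] bc[of i] by simp
    qed
    have c2: "\<forall>i j. 0 \<le> i \<longrightarrow> i < j \<longrightarrow> (\<exists>N. \<forall>n\<ge>N. Ifm [] (ray ((e\<circ>r) i) ((e\<circ>r) j) n) p = P (b 0))"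
    proof (intro allI impI)
      fix i j
      show "\<exists>N. \<forall>n\<ge>N. Ifm [] (ray ((e\<circ>r) i) ((e\<circ>r) j) n) p = P (b 0)"
        apply (rule exI[of _ 0]) using rayv bc[of i] bc[of j] by simp
    qed
    show ?thesis unfolding Good_def using c1 c2 by blast
  next
    assume c: "\<forall>i j. i<j \<longrightarrow> a (r i) < a (r j)"
    hence c': "\<forall>i j. i<j \<longrightarrow> b i < b j" by (simp add: b_def)
    define I where "I = nat (M - b 0)"
    have bi: "b i \<ge> M" if "i \<ge> I" for i
    proof -
      have "b 0 + int i \<le> b i" using strict_inc_bound[OF c'] .
      moreover have "int i \<ge> M - b 0" using that unfolding I_def by linarith
      ultimately show ?thesis by linarith
    qed
    have c1: "\<forall>i\<ge>I. Ifm [] ((e\<circ>r) i) p = P (M)"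
    proof (intro allI impI)
      fix i assume "I \<le> i" hence "P (b i) = P (M)" using bi M1 by blast
      thus "Ifm [] ((e\<circ>r) i) p = P (M)" using seqv[of i] by simp
    qed
    have c2: "\<forall>i j. I \<le> i \<longrightarrow> i < j \<longrightarrow> (\<exists>N. \<forall>n\<ge>N. Ifm [] (ray ((e\<circ>r) i) ((e\<circ>r) j) n) p = P M)"
    proof (intro allI impI)
      fix i j assume "I \<le> i" "i < j"
      hence h: "b i \<ge> M" "b j > b i" using bi c' by auto
      have "b i + int n * (b j - b i) \<ge> M" for n
      proof -
        have "int n * (b j - b i) \<ge> 0" using h by simp
        thus ?thesis using h by linarith
      qed
      hence "P (b i + int n * (b j - b i)) = P (M)" for n using M1 by blast
      thus "\<exists>N. \<forall>n\<ge>N. Ifm [] (ray ((e\<circ>r) i) ((e\<circ>r) j) n) p = P (M)"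
        apply - apply (rule exI[of _ 0]) using rayv by simp
    qed
    show ?thesis unfolding Good_def using c1 c2 by blast
  next
    assume c: "\<forall>i j. i<j \<longrightarrow> a (r j) < a (r i)"
    hence c': "\<forall>i j. i<j \<longrightarrow> b j < b i" by (simp add: b_def)
    define I where "I = nat (b 0 + M)"
    have bi: "b i \<le> -M" if "i \<ge> I" for i
    proof -
      have "b i \<le> b 0 - int i" using strict_dec_bound[OF c'] .
      moreover have "int i \<ge> b 0 + M" using that unfolding I_def by linarith
      ultimately show ?thesis by linarith
    qed
    have c1: "\<forall>i\<ge>I. Ifm [] ((e\<circ>r) i) p = P (-M)"
    proof (intro allI impI)
      fix i assume "I \<le> i" hence "P (b i) = P (-M)" using bi M2 by blast
      thus "Ifm [] ((e\<circ>r) i) p = P (-M)" using seqv[of i] by simp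
    qed
    have c2: "\<forall>i j. I \<le> i \<longrightarrow> i < j \<longrightarrow> (\<exists>N. \<forall>n\<ge>N. Ifm [] (ray ((e\<circ>r) i) ((e\<circ>r) j) n) p = P (-M))"
    proof (intro allI impI)
      fix i j assume "I \<le> i" "i < j"
      hence h: "b i \<le> -M" "b j < b i" using bi c' by auto
      have "b i + int n * (b j - b i) \<le> -M" for n
      proof -
        have "int n * (b j - b i) \<le> 0" using h by (simp add: mult_nonneg_nonpos)
        thus ?thesis using h by linarith
      qed
      hence "P (b i + int n * (b j - b i)) = P (-M)" for n using M2 by blast
      thus "\<exists>N. \<forall>n\<ge>N. Ifm [] (ray ((e\<circ>r) i) ((e\<circ>r) j) n) p = P (-M)"
        apply - apply (rule exI[of _ 0]) using rayv by simp
    qed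
    show ?thesis unfolding Good_def using c1 c2 by blast
  qed
  thus ?thesis using r by blast
qed

lemma Good_dvd:
  assumes len: "\<forall>i. length (e i) = k"
    and P: "\<And>bs. Ifm [] bs p = h (d dvd Inum bs t)" and d: "d \<noteq> 0"
  shows "\<exists>r::nat\<Rightarrow>nat. strict_mono r \<and> Good p (e \<circ> r)"
proof -
  define a where "a i = Inum (e i) t" for i
  obtain r :: "nat \<Rightarrow> nat" where r: "strict_mono r" and cs: "\<forall>i. a (r i) mod d = a (r 0) mod d"
    using mod_extract[OF d, of a] by blast
  define b where "b i = a (r i)" for i
  have rayv: "Ifm [] (ray ((e\<circ>r) i) ((e\<circ>r) j) n) p = h (d dvd (b i + int n * (b j - b i)))" for i j n
    using P Inum_ray len by (simp add: b_def a_def)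
  have seqv: "Ifm [] ((e\<circ>r) i) p = h (d dvd b i)" for i using P by (simp add: b_def a_def)
  have bm: "b i mod d = b 0 mod d" for i using cs[rule_format, of i] by (simp add: b_def)
  have sd: "d dvd b i \<longleftrightarrow> d dvd b 0" for i using bm[of i] by (simp add: dvd_eq_mod_eq_0)
  have c1: "\<forall>i\<ge>0. Ifm [] ((e\<circ>r) i) p = h (d dvd b 0)"
  proof (intro allI impI)
    fix i show "Ifm [] ((e\<circ>r) i) p = h (d dvd b 0)" using seqv[of i] sd[of i] by simp
  qed
  have c2: "\<forall>i j. 0 \<le> i \<longrightarrow> i < j \<longrightarrow> (\<exists>N. \<forall>n\<ge>N. Ifm [] (ray ((e\<circ>r) i) ((e\<circ>r) j) n) p = h (d dvd b 0))"
  proof (intro allI impI)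
    fix i j
    have "d dvd (b j - b 0)" "d dvd (b i - b 0)" using bm[of i] bm[of j] by (simp_all add: mod_eq_dvd_iff)
    hence "d dvd (b j - b 0) - (b i - b 0)" by (rule dvd_diff)
    hence "d dvd (b j - b i)" by simp
    hence "d dvd int n * (b j - b i)" for n by simp
    hence "d dvd (b i + int n * (b j - b i)) \<longleftrightarrow> d dvd b i" for n
      by (rule dvd_add_left_iff)
    thus "\<exists>N. \<forall>n\<ge>N. Ifm [] (ray ((e\<circ>r) i) ((e\<circ>r) j) n) p = h (d dvd b 0)"
      apply - apply (rule exI[of _ 0]) using rayv sd[of i] by simp
  qed
  have "Good p (e \<circ> r)" unfolding Good_def using c1 c2 by blast
  thus ?thesis using r by blast
qed

lemma Good_dvd_all:
  assumes len: "\<forall>i. length (e i) = k"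
    and P: "\<And>bs. Ifm [] bs p = h (d dvd Inum bs t)"
  shows "\<exists>r::nat\<Rightarrow>nat. strict_mono r \<and> Good p (e \<circ> r)"
proof (cases "d = 0")
  case True
  have P': "\<And>bs. Ifm [] bs p = h (Inum bs t = 0)" using P True by simp
  have m1: "\<forall>x\<ge>(1::int). h (x = 0) = h ((1::int) = 0)"
  proof (intro allI impI)
    fix x :: int assume "x \<ge> 1" hence "(x = 0) = False" by simp
    thus "h (x = 0) = h ((1::int) = 0)" by simp
  qed
  have m2: "\<forall>x\<le>-(1::int). h (x = 0) = h ((-1::int) = 0)"
  proof (intro allI impI)
    fix x :: int assume "x \<le> -1" hence "(x = 0) = False" by simp
    thus "h (x = 0) = h ((-1::int) = 0)" by simp
  qed
  show ?thesis by (rule Good_cmp[where P="\<lambda>x. h (x = 0)" and t=t and M=1, OF len P' m1 m2])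
next
  case False thus ?thesis using Good_dvd[OF len P] by blast
qed




lemma Good_qfree:
  "qfree p \<Longrightarrow> \<forall>i. length (e i) = k \<Longrightarrow> \<exists>r::nat\<Rightarrow>nat. strict_mono r \<and> Good p (e \<circ> r)"
proof (induction p arbitrary: e)
  case (Lt t) show ?case by (rule Good_cmp[OF Lt(2), where P="\<lambda>x. x < 0" and t=t and M=1]) auto
next
  case (Le t) show ?case by (rule Good_cmp[OF Le(2), where P="\<lambda>x. x \<le> 0" and t=t and M=1]) auto
next
  case (Gt t) show ?case by (rule Good_cmp[OF Gt(2), where P="\<lambda>x. x > 0" and t=t and M=1]) auto
next
  case (Ge t) show ?case by (rule Good_cmp[OF Ge(2), where P="\<lambda>x. x \<ge> 0" and t=t and M=1]) auto
next
  case (Eq t) show ?case by (rule Good_cmp[OF Eq(2), where P="\<lambda>x. x = 0" and t=t and M=1]) auto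
next
  case (NEq t) show ?case by (rule Good_cmp[OF NEq(2), where P="\<lambda>x. x \<noteq> 0" and t=t and M=1]) auto
next
  case (Dvd d t) show ?case by (rule Good_dvd_all[OF Dvd(2), where h="\<lambda>x. x" and d=d and t=t]) simp
next
  case (NDvd d t) show ?case by (rule Good_dvd_all[OF NDvd(2), where h="\<lambda>x. \<not> x" and d=d and t=t]) simp
next
  case (Not p)
  have "\<exists>r::nat\<Rightarrow>nat. strict_mono r \<and> Good p (e \<circ> r)" using Not.IH[of e] Not.prems by (simp add: comp_def)
  then obtain r :: "nat \<Rightarrow> nat" where "strict_mono r" "Good p (e \<circ> r)" by blast
  moreover have "Good (fm.Not p) (e \<circ> r)" using Good_un[of p "e \<circ> r" "fm.Not p" "\<lambda>x. \<not> x"] calculation by auto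
  ultimately show ?case by blast
next
  case (And p q)
  have "\<exists>r::nat\<Rightarrow>nat. strict_mono r \<and> Good p (e \<circ> r)" using And.IH(1)[of e] And.prems by (simp add: comp_def)
  then obtain r1 :: "nat \<Rightarrow> nat" where r1: "strict_mono r1" "Good p (e \<circ> r1)" by blast
  have "\<forall>i. length ((e \<circ> r1) i) = k" using And by simp
  hence "\<exists>r::nat\<Rightarrow>nat. strict_mono r \<and> Good q (e \<circ> r1 \<circ> r)" using And.IH(2)[of "e \<circ> r1"] And.prems by (simp add: comp_def)
  then obtain r2 :: "nat \<Rightarrow> nat" where r2: "strict_mono r2" "Good q (e \<circ> r1 \<circ> r2)" by blast
  have "Good p (e \<circ> r1 \<circ> r2)" using Good_subseq r1 r2 by blast
  hence "Good (fm.And p q) (e \<circ> (r1 \<circ> r2))" using Good_bin[of p _ q "fm.And p q" "\<lambda>x y. x \<and> y"] r2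
    by (simp add: comp_assoc)
  moreover have "strict_mono (r1 \<circ> r2)" using r1 r2 by (simp add: strict_mono_def)
  ultimately show ?case by blast
next
  case (Or p q)
  have "\<exists>r::nat\<Rightarrow>nat. strict_mono r \<and> Good p (e \<circ> r)" using Or.IH(1)[of e] Or.prems by (simp add: comp_def)
  then obtain r1 :: "nat \<Rightarrow> nat" where r1: "strict_mono r1" "Good p (e \<circ> r1)" by blast
  have "\<forall>i. length ((e \<circ> r1) i) = k" using Or by simp
  hence "\<exists>r::nat\<Rightarrow>nat. strict_mono r \<and> Good q (e \<circ> r1 \<circ> r)" using Or.IH(2)[of "e \<circ> r1"] Or.prems by (simp add: comp_def)
  then obtain r2 :: "nat \<Rightarrow> nat" where r2: "strict_mono r2" "Good q (e \<circ> r1 \<circ> r2)" by blast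
  have "Good p (e \<circ> r1 \<circ> r2)" using Good_subseq r1 r2 by blast
  hence "Good (fm.Or p q) (e \<circ> (r1 \<circ> r2))" using Good_bin[of p _ q "fm.Or p q" "\<lambda>x y. x \<or> y"] r2
    by (simp add: comp_assoc)
  moreover have "strict_mono (r1 \<circ> r2)" using r1 r2 by (simp add: strict_mono_def)
  ultimately show ?case by blast
next
  case (Imp p q)
  have "\<exists>r::nat\<Rightarrow>nat. strict_mono r \<and> Good p (e \<circ> r)" using Imp.IH(1)[of e] Imp.prems by (simp add: comp_def)
  then obtain r1 :: "nat \<Rightarrow> nat" where r1: "strict_mono r1" "Good p (e \<circ> r1)" by blast
  have "\<forall>i. length ((e \<circ> r1) i) = k" using Imp by simp
  hence "\<exists>r::nat\<Rightarrow>nat. strict_mono r \<and> Good q (e \<circ> r1 \<circ> r)" using Imp.IH(2)[of "e \<circ> r1"] Imp.prems by (simp add: comp_def)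
  then obtain r2 :: "nat \<Rightarrow> nat" where r2: "strict_mono r2" "Good q (e \<circ> r1 \<circ> r2)" by blast
  have "Good p (e \<circ> r1 \<circ> r2)" using Good_subseq r1 r2 by blast
  hence "Good (fm.Imp p q) (e \<circ> (r1 \<circ> r2))" using Good_bin[of p _ q "fm.Imp p q" "\<lambda>x y. x \<longrightarrow> y"] r2
    by (simp add: comp_assoc)
  moreover have "strict_mono (r1 \<circ> r2)" using r1 r2 by (simp add: strict_mono_def)
  ultimately show ?case by blast
next
  case (Iff p q)
  have "\<exists>r::nat\<Rightarrow>nat. strict_mono r \<and> Good p (e \<circ> r)" using Iff.IH(1)[of e] Iff.prems by (simp add: comp_def)
  then obtain r1 :: "nat \<Rightarrow> nat" where r1: "strict_mono r1" "Good p (e \<circ> r1)" by blast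
  have "\<forall>i. length ((e \<circ> r1) i) = k" using Iff by simp
  hence "\<exists>r::nat\<Rightarrow>nat. strict_mono r \<and> Good q (e \<circ> r1 \<circ> r)" using Iff.IH(2)[of "e \<circ> r1"] Iff.prems by (simp add: comp_def)
  then obtain r2 :: "nat \<Rightarrow> nat" where r2: "strict_mono r2" "Good q (e \<circ> r1 \<circ> r2)" by blast
  have "Good p (e \<circ> r1 \<circ> r2)" using Good_subseq r1 r2 by blast
  hence "Good (fm.Iff p q) (e \<circ> (r1 \<circ> r2))" using Good_bin[of p _ q "fm.Iff p q" "\<lambda>x y. x = y"] r2
    by (simp add: comp_assoc)
  moreover have "strict_mono (r1 \<circ> r2)" using r1 r2 by (simp add: strict_mono_def)
  ultimately show ?case by blast
next
  case (E p) thus ?case by simp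
next
  case (A p) thus ?case by simp
next
  case T show ?case by (intro exI[of _ id] conjI strict_mono_id Good_const[where c=True]) simp
next
  case F show ?case by (intro exI[of _ id] conjI strict_mono_id Good_const[where c=False]) simp
next
  case (Closed n) show ?case by (intro exI[of _ id] conjI strict_mono_id Good_const[where c="[] ! n"]) simp
next
  case (NClosed n) show ?case by (intro exI[of _ id] conjI strict_mono_id Good_const[where c="\<not> [] ! n"]) simp
qed




definition combl :: "(nat^'d) list \<Rightarrow> nat list \<Rightarrow> nat^'d" where
  "combl fs x = (\<Sum>i<length fs. vsmul (x!i) (fs!i))"

lemma vsmul_comp [simp]: "vsmul n v $ t = n * v $ t"
  by (simp add: vsmul_def)

lemma combl_comp: "combl fs x $ t = (\<Sum>i<length fs. x!i * fs!i $ t)"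
  by (simp add: combl_def sum_component)

lemma sum_list_set:
  assumes "distinct gs"
  shows "(\<Sum>i<length gs. g (gs!i)) = (\<Sum>f\<in>set gs. g f)"
proof -
  have im: "nth gs ` {..<length gs} = set gs" by (auto simp: in_set_conv_nth)
  have "inj_on (nth gs) {..<length gs}" using assms by (intro inj_on_nth) auto
  from sum.reindex[OF this, of g] show ?thesis using im by simp
qed

lemma vsmul_0 [simp]: "vsmul 0 v = 0"
  by (simp add: vsmul_def vec_eq_iff)

lemma nat_comb_list:
  assumes "distinct gs"
  shows "nat_comb (set gs) = {combl gs \<nu> | \<nu>. length \<nu> = length gs}"
proof
  show "nat_comb (set gs) \<subseteq> {combl gs \<nu> | \<nu>. length \<nu> = length gs}"
  proof
    fix y assume "y \<in> nat_comb (set gs)"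
    then obtain G c where y: "y = (\<Sum>f\<in>G. vsmul (c f) f)" and G: "finite G" "G \<subseteq> set gs"
      unfolding nat_comb_def by blast
    define c' where "c' f = (if f \<in> G then c f else 0)" for f
    have "y = (\<Sum>f\<in>set gs. vsmul (c' f) f)"
      unfolding y using G by (intro sum.mono_neutral_cong_left) (auto simp: c'_def)
    also have "\<dots> = (\<Sum>i<length gs. vsmul (c' (gs!i)) (gs!i))"
      using sum_list_set[OF assms, of "\<lambda>f. vsmul (c' f) f"] by simp
    also have "\<dots> = combl gs (map c' gs)" unfolding combl_def by simp
    finally show "y \<in> {combl gs \<nu> | \<nu>. length \<nu> = length gs}" by force
  qed
next
  show "{combl gs \<nu> | \<nu>. length \<nu> = length gs} \<subseteq> nat_comb (set gs)"
  proof
    fix y assume "y \<in> {combl gs \<nu> | \<nu>. length \<nu> = length gs}"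
    then obtain \<nu> where y: "y = combl gs \<nu>" and l: "length \<nu> = length gs" by blast
    define c where "c f = \<nu> ! (THE i. i < length gs \<and> gs!i = f)" for f
    have ci: "c (gs!i) = \<nu>!i" if "i < length gs" for i
    proof -
      have "(THE j. j < length gs \<and> gs!j = gs!i) = i"
        using that assms by (intro the_equality) (auto simp: nth_eq_iff_index_eq)
      thus ?thesis by (simp add: c_def)
    qed
    have "y = (\<Sum>i<length gs. vsmul (c (gs!i)) (gs!i))" unfolding y combl_def
      by (intro sum.cong) (auto simp: ci)
    also have "\<dots> = (\<Sum>f\<in>set gs. vsmul (c f) f)"
      using sum_list_set[OF assms, of "\<lambda>f. vsmul (c f) f"] by simp
    finally show "y \<in> nat_comb (set gs)" unfolding nat_comb_def by blast
  qed
qed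

lemma nat_comb_ge1_list:
  assumes "distinct gs" "length \<mu> = length gs" "\<forall>i<length gs. \<mu>!i \<ge> 1"
  shows "combl gs \<mu> \<in> nat_comb_ge1 (set gs)"
proof -
  define c where "c f = \<mu> ! (THE i. i < length gs \<and> gs!i = f)" for f
  have ci: "c (gs!i) = \<mu>!i" if "i < length gs" for i
  proof -
    have "(THE j. j < length gs \<and> gs!j = gs!i) = i"
      using that assms by (intro the_equality) (auto simp: nth_eq_iff_index_eq)
    thus ?thesis by (simp add: c_def)
  qed
  have c1: "\<forall>f\<in>set gs. c f \<ge> 1" using ci assms(3) by (auto simp: in_set_conv_nth)
  have "combl gs \<mu> = (\<Sum>i<length gs. vsmul (c (gs!i)) (gs!i))" unfolding combl_def
    by (intro sum.cong) (auto simp: ci)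
  also have "\<dots> = (\<Sum>f\<in>set gs. vsmul (c f) f)"
    using sum_list_set[OF assms(1), of "\<lambda>f. vsmul (c f) f"] by simp
  finally show ?thesis unfolding nat_comb_ge1_def using c1 by blast
qed

lemma combl_lin:
  assumes "length x = length fs" "length \<mu> = length fs"
  shows "combl fs (map (\<lambda>t. x!t + n * \<mu>!t) [0..<length fs]) = combl fs x + vsmul n (combl fs \<mu>)"
  unfolding vec_eq_iff
proof
  fix t
  have "combl fs (map (\<lambda>t. x!t + n * \<mu>!t) [0..<length fs]) $ t
      = (\<Sum>i<length fs. (x!i + n * \<mu>!i) * fs!i $ t)" by (simp add: combl_comp)
  also have "\<dots> = (\<Sum>i<length fs. x!i * fs!i $ t) + n * (\<Sum>i<length fs. \<mu>!i * fs!i $ t)"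
    by (simp add: sum.distrib sum_distrib_left algebra_simps)
  finally show "combl fs (map (\<lambda>t. x!t + n * \<mu>!t) [0..<length fs]) $ t = (combl fs x + vsmul n (combl fs \<mu>)) $ t"
    by (simp add: combl_comp)
qed

lemma combl_add:
  assumes "length x = length fs" "length y = length fs"
  shows "combl fs (map (\<lambda>t. x!t + y!t) [0..<length fs]) = combl fs x + combl fs y"
  using combl_lin[OF assms, of 1] by (simp add: vsmul_def vec_eq_iff)

lemma ray_int:
  assumes "length x = k" "length y = k" "\<forall>t<k. x!t \<le> y!t"
  shows "ray (map int x) (map int y) n = map int (map (\<lambda>t. x!t + n * (y!t - x!t)) [0..<k])"
  using assms by (intro nth_equalityI) (auto simp: ray_def of_nat_diff)




fun lin :: "nat \<Rightarrow> int list \<Rightarrow> int \<Rightarrow> Cooper.num" where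
  "lin off [] c = num.C c"
| "lin off (a#as) c = num.CN off a (lin (Suc off) as c)"

lemma Inum_lin: "Inum bs (lin off cs c) = (\<Sum>i<length cs. cs!i * bs!(off+i)) + c"
  by (induction cs arbitrary: off) (simp_all add: sum.lessThan_Suc_shift del: sum.lessThan_Suc)

fun bigAnd :: "fm list \<Rightarrow> fm" where
  "bigAnd [] = fm.T"
| "bigAnd (p#ps) = fm.And p (bigAnd ps)"

fun bigOr :: "fm list \<Rightarrow> fm" where
  "bigOr [] = fm.F"
| "bigOr (p#ps) = fm.Or p (bigOr ps)"

lemma Ifm_bigAnd: "Ifm bbs bs (bigAnd ps) \<longleftrightarrow> (\<forall>p\<in>set ps. Ifm bbs bs p)"
  by (induction ps) auto

lemma Ifm_bigOr: "Ifm bbs bs (bigOr ps) \<longleftrightarrow> (\<exists>p\<in>set ps. Ifm bbs bs p)"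
  by (induction ps) auto

definition exN :: "nat \<Rightarrow> fm \<Rightarrow> fm" where "exN m p = (fm.E ^^ m) p"

lemma Ifm_exN: "Ifm bbs bs (exN m p) \<longleftrightarrow> (\<exists>ys. length ys = m \<and> Ifm bbs (ys @ bs) p)"
proof (induction m arbitrary: bs)
  case 0 show ?case by (simp add: exN_def)
next
  case (Suc m)
  have "Ifm bbs bs (exN (Suc m) p) \<longleftrightarrow> (\<exists>x. Ifm bbs (x # bs) (exN m p))" by (simp add: exN_def)
  also have "\<dots> \<longleftrightarrow> (\<exists>x ys. length ys = m \<and> Ifm bbs (ys @ x # bs) p)" using Suc by simp
  also have "\<dots> \<longleftrightarrow> (\<exists>zs. length zs = Suc m \<and> Ifm bbs (zs @ bs) p)"
  proof
    assume "\<exists>x ys. length ys = m \<and> Ifm bbs (ys @ x # bs) p"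
    then obtain x ys where "length ys = m" "Ifm bbs (ys @ x # bs) p" by blast
    thus "\<exists>zs. length zs = Suc m \<and> Ifm bbs (zs @ bs) p" by (intro exI[of _ "ys @ [x]"]) simp
  next
    assume "\<exists>zs. length zs = Suc m \<and> Ifm bbs (zs @ bs) p"
    then obtain zs where zs: "length zs = Suc m" "Ifm bbs (zs @ bs) p" by blast
    then obtain ys x where "zs = ys @ [x]" by (metis length_Suc_conv_rev)
    thus "\<exists>x ys. length ys = m \<and> Ifm bbs (ys @ x # bs) p" using zs by auto
  qed
  finally show ?case .
qed

definition eqn :: "(nat^'d) list \<Rightarrow> (nat^'d) list \<Rightarrow> nat^'d \<Rightarrow> nat^'d \<Rightarrow> 'd \<Rightarrow> fm" where
  "eqn fs gs b b' t = fm.Eq (num.Add (lin 0 (map (\<lambda>g. int (g$t)) gs) 0)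
       (lin (length gs) (map (\<lambda>f. - int (f$t)) fs) (int (b'$t) - int (b$t))))"

lemma Ifm_eqn:
  assumes "length ys = length gs" "length xs = length fs"
  shows "Ifm bbs (ys @ xs) (eqn fs gs b b' t) \<longleftrightarrow>
    (\<Sum>l<length gs. int (gs!l$t) * ys!l) + int (b'$t) = (\<Sum>i<length fs. int (fs!i$t) * xs!i) + int (b$t)"
proof -
  have s1: "(\<Sum>i<length (map (\<lambda>g. int (g$t)) gs). map (\<lambda>g. int (g$t)) gs ! i * (ys @ xs) ! (0 + i))
      = (\<Sum>l<length gs. int (gs!l$t) * ys!l)"
    by (intro sum.cong) (auto simp: nth_append assms)
  have s2: "(\<Sum>i<length (map (\<lambda>f. - int (f$t)) fs). map (\<lambda>f. - int (f$t)) fs ! i * (ys @ xs) ! (length gs + i))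
      = - (\<Sum>i<length fs. int (fs!i$t) * xs!i)"
    unfolding sum_negf[symmetric] by (intro sum.cong) (auto simp: nth_append assms)
  show ?thesis
    unfolding eqn_def Ifm.simps Inum.simps Inum_lin s1 s2 by linarith
qed

definition memb :: "(nat^'d) list \<Rightarrow> 'd list \<Rightarrow> nat^'d \<Rightarrow> nat^'d \<Rightarrow> (nat^'d) list \<Rightarrow> fm" where
  "memb fs ts b b' gs = exN (length gs) (fm.And (bigAnd (map (\<lambda>l. fm.Ge (num.Bound l)) [0..<length gs]))
      (bigAnd (map (eqn fs gs b b') ts)))"

lemma comp_int_iff:
  "(b' + combl gs \<nu>) $ t = (b + combl fs x) $ t \<longleftrightarrow>
   (\<Sum>l<length gs. int (gs!l$t) * int (\<nu>!l)) + int (b'$t) = (\<Sum>i<length fs. int (fs!i$t) * int (x!i)) + int (b$t)"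
proof -
  have e1: "int ((b' + combl gs \<nu>) $ t) = (\<Sum>l<length gs. int (gs!l$t) * int (\<nu>!l)) + int (b'$t)"
    by (simp add: combl_comp of_nat_sum algebra_simps)
  have e2: "int ((b + combl fs x) $ t) = (\<Sum>i<length fs. int (fs!i$t) * int (x!i)) + int (b$t)"
    by (simp add: combl_comp of_nat_sum algebra_simps)
  have "(b' + combl gs \<nu>) $ t = (b + combl fs x) $ t \<longleftrightarrow>
        int ((b' + combl gs \<nu>) $ t) = int ((b + combl fs x) $ t)" by (rule of_nat_eq_iff[symmetric])
  thus ?thesis unfolding e1 e2 .
qed

lemma Ifm_memb:
  assumes ts: "set ts = UNIV" and lx: "length x = length fs"
  shows "Ifm bbs (map int x) (memb fs ts b b' gs) \<longleftrightarrow> (\<exists>\<nu>. length \<nu> = length gs \<and> b' + combl gs \<nu> = b + combl fs x)"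
proof -
  define body where "body = fm.And (bigAnd (map (\<lambda>l. fm.Ge (num.Bound l)) [0..<length gs]))
      (bigAnd (map (eqn fs gs b b') ts))"
  define Q where "Q ys \<longleftrightarrow> (\<forall>l<length gs. 0 \<le> ys!l) \<and> (\<forall>t. (\<Sum>l<length gs. int (gs!l$t) * ys!l) + int (b'$t)
       = (\<Sum>i<length fs. int (fs!i$t) * int (x!i)) + int (b$t))" for ys
  have bq: "Ifm bbs (ys @ map int x) body \<longleftrightarrow> Q ys" if "length ys = length gs" for ys
  proof -
    have "Ifm bbs (ys @ map int x) (eqn fs gs b b' t) \<longleftrightarrow> (\<Sum>l<length gs. int (gs!l$t) * ys!l) + int (b'$t)
       = (\<Sum>i<length fs. int (fs!i$t) * int (x!i)) + int (b$t)" for t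
      using Ifm_eqn[of ys gs "map int x" fs bbs b b' t] that lx by simp
    moreover have "Ifm bbs (ys @ map int x) (fm.Ge (num.Bound l)) \<longleftrightarrow> 0 \<le> ys!l" if "l < length gs" for l
      using that \<open>length ys = length gs\<close> by (simp add: nth_append)
    ultimately show ?thesis unfolding body_def Q_def using ts by (auto simp: Ifm_bigAnd)
  qed
  have "Ifm bbs (map int x) (memb fs ts b b' gs) \<longleftrightarrow> (\<exists>ys. length ys = length gs \<and> Q ys)"
    unfolding memb_def body_def[symmetric] Ifm_exN using bq by blast
  also have "\<dots> \<longleftrightarrow> (\<exists>\<nu>. length \<nu> = length gs \<and> b' + combl gs \<nu> = b + combl fs x)"
  proof
    assume "\<exists>ys. length ys = length gs \<and> Q ys"
    then obtain ys where ys: "length ys = length gs" "Q ys" by blast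
    define \<nu> where "\<nu> = map nat ys"
    have yn: "ys ! l = int (\<nu> ! l)" if "l < length gs" for l
      using ys that unfolding Q_def \<nu>_def by auto
    have "(b' + combl gs \<nu>) $ t = (b + combl fs x) $ t" for t
    proof -
      have "(\<Sum>l<length gs. int (gs!l$t) * int (\<nu>!l)) = (\<Sum>l<length gs. int (gs!l$t) * ys!l)"
        by (intro sum.cong) (auto simp: yn)
      thus ?thesis unfolding comp_int_iff using ys(2) unfolding Q_def by simp
    qed
    hence "b' + combl gs \<nu> = b + combl fs x" by (simp add: vec_eq_iff)
    moreover have "length \<nu> = length gs" using ys by (simp add: \<nu>_def)
    ultimately show "\<exists>\<nu>. length \<nu> = length gs \<and> b' + combl gs \<nu> = b + combl fs x" by blast
  next
    assume "\<exists>\<nu>. length \<nu> = length gs \<and> b' + combl gs \<nu> = b + combl fs x"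
    then obtain \<nu> where n: "length \<nu> = length gs" "b' + combl gs \<nu> = b + combl fs x" by blast
    have "Q (map int \<nu>)" unfolding Q_def
    proof (intro conjI allI impI)
      fix l assume "l < length gs" thus "0 \<le> map int \<nu> ! l" using n by simp
    next
      fix t
      have "(b' + combl gs \<nu>) $ t = (b + combl fs x) $ t" using n by simp
      hence e: "(\<Sum>l<length gs. int (gs!l$t) * int (\<nu>!l)) + int (b'$t) = (\<Sum>i<length fs. int (fs!i$t) * int (x!i)) + int (b$t)"
        unfolding comp_int_iff .
      have "(\<Sum>l<length gs. int (gs!l$t) * map int \<nu> ! l) = (\<Sum>l<length gs. int (gs!l$t) * int (\<nu>!l))"
        by (intro sum.cong) (auto simp: n)
      thus "(\<Sum>l<length gs. int (gs!l$t) * map int \<nu> ! l) + int (b'$t) = (\<Sum>i<length fs. int (fs!i$t) * int (x!i)) + int (b$t)"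
        using e by simp
    qed
    thus "\<exists>ys. length ys = length gs \<and> Q ys" using n by (intro exI[of _ "map int \<nu>"]) simp
  qed
  finally show ?thesis .
qed

definition rep :: "((nat^'d) \<times> (nat^'d) list) list \<Rightarrow> (nat^'d) set" where
  "rep P = {y. \<exists>bg\<in>set P. \<exists>\<nu>. length \<nu> = length (snd bg) \<and> fst bg + combl (snd bg) \<nu> = y}"

definition badfm :: "(nat^'d) list \<Rightarrow> 'd list \<Rightarrow> nat^'d \<Rightarrow> ((nat^'d) \<times> (nat^'d) list) list \<Rightarrow> fm" where
  "badfm fs ts b P = fm.Not (bigOr (map (\<lambda>bg. memb fs ts b (fst bg) (snd bg)) P))"

lemma Ifm_badfm:
  assumes "set ts = UNIV" "length x = length fs"
  shows "Ifm bbs (map int x) (badfm fs ts b P) \<longleftrightarrow> b + combl fs x \<notin> rep P"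
  unfolding badfm_def rep_def by (simp add: Ifm_bigOr Ifm_memb[OF assms])

lemma hl_rep:
  assumes "hybridlinear L"
  shows "\<exists>P. L = rep P"
proof -
  obtain B' F' where fin: "finite B'" "finite F'" and L: "L = hybridlinear_set B' F'"
    using assms unfolding hybridlinear_def by blast
  obtain gs where gs: "set gs = F'" "distinct gs" using finite_distinct_list[OF fin(2)] by blast
  obtain bl where bl: "set bl = B'" using finite_list[OF fin(1)] by blast
  have nc: "p \<in> nat_comb F' \<longleftrightarrow> (\<exists>\<nu>. length \<nu> = length gs \<and> combl gs \<nu> = p)" for p
    using nat_comb_list[OF gs(2)] gs(1) by auto
  have "L = rep (map (\<lambda>b'. (b', gs)) bl)"
  proof (rule set_eqI)
    fix y
    have "y \<in> L \<longleftrightarrow> (\<exists>b'\<in>B'. \<exists>p\<in>nat_comb F'. y = b' + p)"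
      unfolding L hybridlinear_set_def by auto
    also have "\<dots> \<longleftrightarrow> (\<exists>b'\<in>set bl. \<exists>\<nu>. length \<nu> = length gs \<and> b' + combl gs \<nu> = y)"
    proof
      assume "\<exists>b'\<in>B'. \<exists>p\<in>nat_comb F'. y = b' + p"
      then obtain b' p where bp: "b'\<in>B'" "p \<in> nat_comb F'" "y = b' + p" by blast
      then obtain \<nu> where "length \<nu> = length gs" "combl gs \<nu> = p" using nc by blast
      thus "\<exists>b'\<in>set bl. \<exists>\<nu>. length \<nu> = length gs \<and> b' + combl gs \<nu> = y" using bl bp by blast
    next
      assume "\<exists>b'\<in>set bl. \<exists>\<nu>. length \<nu> = length gs \<and> b' + combl gs \<nu> = y"
      then obtain b' \<nu> where bn: "b' \<in> set bl" "length \<nu> = length gs" "b' + combl gs \<nu> = y" by blast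
      moreover have "combl gs \<nu> \<in> nat_comb F'" using nc bn by blast
      ultimately show "\<exists>b'\<in>B'. \<exists>p\<in>nat_comb F'. y = b' + p" using bl by blast
    qed
    also have "\<dots> \<longleftrightarrow> y \<in> rep (map (\<lambda>b'. (b', gs)) bl)"
      unfolding rep_def by auto
    finally show "y \<in> L \<longleftrightarrow> y \<in> rep (map (\<lambda>b'. (b', gs)) bl)" .
  qed
  thus ?thesis by blast
qed

lemma rep_concat: "rep (concat Ps) = (\<Union>P\<in>set Ps. rep P)"
  unfolding rep_def by auto

lemma sl_rep:
  assumes "semilinear S"
  shows "\<exists>P. S = rep P"
proof -
  obtain \<L> where L: "finite \<L>" "\<forall>L\<in>\<L>. hybridlinear L" "S = \<Union>\<L>"
    using assms unfolding semilinear_def by blast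
  obtain Ls where Ls: "set Ls = \<L>" using finite_list[OF L(1)] by blast
  have "\<forall>L\<in>set Ls. \<exists>P. L = rep P" using Ls L(2) hl_rep by blast
  from bchoice[OF this] obtain f where f: "\<forall>L\<in>set Ls. L = rep (f L)" by blast
  have "rep (concat (map f Ls)) = (\<Union>L\<in>set Ls. rep (f L))" by (simp add: rep_concat)
  also have "\<dots> = (\<Union>L\<in>set Ls. L)" using f by (intro SUP_cong) auto
  also have "\<dots> = S" using Ls L(3) by simp
  finally show ?thesis by (intro exI[of _ "concat (map f Ls)"]) simp
qed




lemma main_b:
  fixes b :: "nat^'d" and S :: "(nat^'d) set" and fs :: "(nat^'d) list"
  assumes dist: "distinct fs" and sl: "semilinear S"
    and ray: "\<And>x \<mu>. length x = length fs \<Longrightarrow> length \<mu> = length fs \<Longrightarrow> (\<forall>i<length fs. \<mu>!i \<ge> 1) \<Longrightarrow>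
               \<exists>N. \<forall>n\<ge>N. b + combl fs x + vsmul n (combl fs \<mu>) \<in> S"
  shows "\<exists>p\<in>nat_comb (set fs). \<forall>q\<in>nat_comb (set fs). p + b + q \<in> S"
proof (rule ccontr)
  assume neg: "\<not> ?thesis"
  obtain P where SP: "S = rep P" using sl_rep[OF sl] by blast
  obtain ts :: "'d list" where ts: "set ts = UNIV" using finite_list[of "UNIV::'d set"] by auto
  define bad where "bad x \<longleftrightarrow> b + combl fs x \<notin> S" for x
  have NC: "nat_comb (set fs) = {combl fs \<nu> | \<nu>. length \<nu> = length fs}" by (rule nat_comb_list[OF dist])
  have cof: "\<exists>\<beta>. length \<beta> = length fs \<and> (\<forall>i<length fs. \<pi>!i \<le> \<beta>!i) \<and> bad \<beta>" if "length \<pi> = length fs" for \<pi>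
  proof -
    have "combl fs \<pi> \<in> nat_comb (set fs)" using NC that by auto
    then obtain q where q: "q \<in> nat_comb (set fs)" "combl fs \<pi> + b + q \<notin> S" using neg by blast
    then obtain \<mu> where mu: "length \<mu> = length fs" "combl fs \<mu> = q" using NC by auto
    define \<beta> where "\<beta> = map (\<lambda>t. \<pi>!t + \<mu>!t) [0..<length fs]"
    have "combl fs \<beta> = combl fs \<pi> + combl fs \<mu>" unfolding \<beta>_def using combl_add[OF that mu(1)] .
    hence "bad \<beta>" using q mu unfolding bad_def by (simp add: ac_simps)
    moreover have "length \<beta> = length fs" "\<forall>i<length fs. \<pi>!i \<le> \<beta>!i" by (auto simp: \<beta>_def)
    ultimately show ?thesis by blast
  qed
  define g where "g x = (SOME \<beta>. length \<beta> = length fs \<and> (\<forall>i<length fs. x!i + 1 \<le> \<beta>!i) \<and> bad \<beta>)" for x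
  have g: "length (g x) = length fs \<and> (\<forall>i<length fs. x!i + 1 \<le> g x!i) \<and> bad (g x)" if "length x = length fs" for x
  proof -
    have "\<exists>\<beta>. length \<beta> = length fs \<and> (\<forall>i<length fs. x!i + 1 \<le> \<beta>!i) \<and> bad \<beta>"
      using cof[of "map (\<lambda>i. x!i + 1) [0..<length fs]"] by simp
    thus ?thesis unfolding g_def by (rule someI_ex)
  qed
  define s where "s n = (g ^^ Suc n) (replicate (length fs) 0)" for n
  have sSuc: "s (Suc n) = g (s n)" for n by (simp add: s_def)
  have sprop: "length (s n) = length fs \<and> bad (s n)" for n
  proof (induction n)
    case 0 show ?case using g[of "replicate (length fs) 0"] by (simp add: s_def)
  next
    case (Suc n) thus ?case using g[of "s n"] sSuc by simp
  qed
  have sinc: "s n ! t < s m ! t" if "n < m" "t < length fs" for n m t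
  proof -
    have "s n ! t < s (Suc n) ! t" for n using g[of "s n"] sprop[of n] sSuc[of n] \<open>t < length fs\<close> by fastforce
    thus ?thesis using lift_Suc_mono_less[of "\<lambda>n. s n ! t"] that by blast
  qed
  define e where "e n = map int (s n)" for n
  define \<psi> where "\<psi> = pa (badfm fs ts b P)"
  have qf: "qfree \<psi>" using mirqe unfolding \<psi>_def by blast
  have psi: "Ifm [] (map int x) \<psi> \<longleftrightarrow> bad x" if "length x = length fs" for x
    using mirqe[of "[]" "map int x" "badfm fs ts b P"] Ifm_badfm[OF ts that, of "[]" b P]
    unfolding \<psi>_def bad_def SP by simp
  have len: "\<forall>i. length (e i) = length fs" using sprop by (simp add: e_def)
  obtain r :: "nat \<Rightarrow> nat" where r: "strict_mono r" "Good \<psi> (e \<circ> r)" using Good_qfree[OF qf len] by blast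
  then obtain v I where h1: "\<forall>i\<ge>I. Ifm [] ((e\<circ>r) i) \<psi> = v"
    and h2: "\<forall>i j. I \<le> i \<longrightarrow> i < j \<longrightarrow> (\<exists>N. \<forall>n\<ge>N. Ifm [] (ray ((e\<circ>r) i) ((e\<circ>r) j) n) \<psi> = v)"
    unfolding Good_def by blast
  have "Ifm [] (e (r I)) \<psi> = v" using h1 by simp
  hence v: "v" using psi[of "s (r I)"] sprop[of "r I"] by (simp add: e_def)
  define x where "x = s (r I)"
  define y where "y = s (r (Suc I))"
  have lx: "length x = length fs" and ly: "length y = length fs" using sprop by (simp_all add: x_def y_def)
  have "r I < r (Suc I)" using r(1) by (simp add: strict_mono_def)
  hence xy: "\<forall>t<length fs. x!t \<le> y!t" "\<forall>t<length fs. x!t < y!t" using sinc unfolding x_def y_def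
    by (auto intro: less_imp_le)
  obtain N where N: "\<forall>n\<ge>N. Ifm [] (ray (e (r I)) (e (r (Suc I))) n) \<psi> = v" using h2 by fastforce
  define \<mu> where "\<mu> = map (\<lambda>t. y!t - x!t) [0..<length fs]"
  have lmu: "length \<mu> = length fs" by (simp add: \<mu>_def)
  have mu1: "\<forall>i<length fs. \<mu>!i \<ge> 1" using xy(2) by (auto simp: \<mu>_def)
  obtain N' where N': "\<forall>n\<ge>N'. b + combl fs x + vsmul n (combl fs \<mu>) \<in> S" using ray[OF lx lmu mu1] by blast
  define n where "n = max N N'"
  define z where "z = map (\<lambda>t. x!t + n * (y!t - x!t)) [0..<length fs]"
  have eqr: "ray (e (r I)) (e (r (Suc I))) n = map int z"
    unfolding e_def z_def x_def[symmetric] y_def[symmetric] using ray_int[OF lx ly xy(1)] by simp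
  have "Ifm [] (ray (e (r I)) (e (r (Suc I))) n) \<psi>" using N[rule_format, of n] v by (simp add: n_def)
  hence "Ifm [] (map int z) \<psi>" using eqr by simp
  hence "bad z" using psi[of z] by (simp add: z_def)
  moreover have "z = map (\<lambda>t. x!t + n * \<mu>!t) [0..<length fs]" unfolding z_def \<mu>_def by simp
  hence "combl fs z = combl fs x + vsmul n (combl fs \<mu>)" using combl_lin[OF lx lmu, of n] by simp
  ultimately show False using N'[rule_format, of n] unfolding bad_def by (simp add: n_def add.assoc)
qed

lemma nat_comb_add:
  assumes "distinct fs" "x \<in> nat_comb (set fs)" "y \<in> nat_comb (set fs)"
  shows "x + y \<in> nat_comb (set fs)"
proof -
  have NC: "nat_comb (set fs) = {combl fs \<nu> | \<nu>. length \<nu> = length fs}" by (rule nat_comb_list[OF assms(1)])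
  have "x \<in> {combl fs \<nu> | \<nu>. length \<nu> = length fs}" using assms(2) NC by simp
  then obtain a where a: "length a = length fs" "x = combl fs a" by blast
  have "y \<in> {combl fs \<nu> | \<nu>. length \<nu> = length fs}" using assms(3) NC by simp
  then obtain c where c: "length c = length fs" "y = combl fs c" by blast
  have eq: "x + y = combl fs (map (\<lambda>t. a!t + c!t) [0..<length fs])" using combl_add[OF a(1) c(1)] a(2) c(2) by simp
  have "length (map (\<lambda>t. a!t + c!t) [0..<length fs]) = length fs" by simp
  thus ?thesis unfolding NC using eq by blast
qed

lemma nat_comb_zero: "0 \<in> nat_comb F"
  unfolding nat_comb_def by (rule CollectI, rule exI[of _ "{}"]) simp

lemma nat_comb_sum:
  assumes "distinct fs" "finite A" "\<forall>a\<in>A. f a \<in> nat_comb (set fs)"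
  shows "sum f A \<in> nat_comb (set fs)"
  using assms(2,3)
proof (induction A rule: finite_induct)
  case empty thus ?case by (simp add: nat_comb_zero)
next
  case (insert a A) thus ?case using nat_comb_add[OF assms(1)] by simp
qed

theorem mainTheorem6:
  fixes X S B F :: "(nat ^ 'd) set"
  assumes "finite B" and "finite F"
    and "asymp_overapprox X B F"
    and "semilinear S" and "X \<subseteq> S"
  shows "\<exists>p\<in>nat_comb F. {p + l | l. l \<in> hybridlinear_set B F} \<subseteq> S"
proof -
  obtain fs where fs: "set fs = F" "distinct fs" using finite_distinct_list[OF assms(2)] by blast
  have XR: "\<forall>x\<in>hybridlinear_set B F. \<forall>w\<in>nat_comb_ge1 F. \<exists>N. \<forall>n\<ge>N. x + vsmul n w \<in> X"
    using assms(3) unfolding asymp_overapprox_def by blast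
  have NC: "nat_comb F = {combl fs \<nu> | \<nu>. length \<nu> = length fs}" using nat_comb_list[OF fs(2)] fs(1) by simp
  have pb: "\<exists>p. p \<in> nat_comb F \<and> (\<forall>q\<in>nat_comb F. p + b + q \<in> S)" if bB: "b \<in> B" for b
  proof -
    have "\<exists>N. \<forall>n\<ge>N. b + combl fs x + vsmul n (combl fs \<mu>) \<in> S"
      if "length x = length fs" "length \<mu> = length fs" "\<forall>i<length fs. \<mu>!i \<ge> 1" for x \<mu>
    proof -
      have "combl fs x \<in> nat_comb F" using NC that(1) by auto
      hence "b + combl fs x \<in> hybridlinear_set B F" using bB unfolding hybridlinear_set_def by blast
      moreover have "combl fs \<mu> \<in> nat_comb_ge1 F" using nat_comb_ge1_list[OF fs(2) that(2,3)] fs(1) by simp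
      ultimately obtain N where "\<forall>n\<ge>N. b + combl fs x + vsmul n (combl fs \<mu>) \<in> X" using XR by blast
      thus ?thesis using assms(5) by blast
    qed
    from main_b[OF fs(2) assms(4) this] have "\<exists>p\<in>nat_comb (set fs). \<forall>q\<in>nat_comb (set fs). p + b + q \<in> S" .
    thus ?thesis unfolding fs(1) by blast
  qed
  have "\<forall>b\<in>B. \<exists>p. p \<in> nat_comb F \<and> (\<forall>q\<in>nat_comb F. p + b + q \<in> S)" using pb by blast
  from bchoice[OF this] obtain pf where pf: "\<forall>b\<in>B. pf b \<in> nat_comb F \<and> (\<forall>q\<in>nat_comb F. pf b + b + q \<in> S)"
    by blast
  have pfF: "\<forall>b\<in>A. pf b \<in> nat_comb (set fs)" if "A \<subseteq> B" for A using pf that fs(1) by auto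
  define p where "p = (\<Sum>b\<in>B. pf b)"
  have pin: "p \<in> nat_comb F" unfolding p_def using nat_comb_sum[OF fs(2) assms(1) pfF[of B]] fs(1) by simp
  show ?thesis
  proof (rule bexI[OF _ pin], rule subsetI)
    fix z assume "z \<in> {p + l | l. l \<in> hybridlinear_set B F}"
    then obtain l where zl: "z = p + l" "l \<in> hybridlinear_set B F" by blast
    then obtain b q where bq: "b \<in> B" "q \<in> nat_comb F" "l = b + q"
      unfolding hybridlinear_set_def by blast
    have "p = pf b + (\<Sum>b'\<in>B - {b}. pf b')" unfolding p_def by (rule sum.remove[OF assms(1) bq(1)])
    hence z: "z = pf b + b + ((\<Sum>b'\<in>B - {b}. pf b') + q)" using zl(1) bq(3) by (simp add: ac_simps)
    have fB: "finite (B - {b})" using assms(1) by simp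
    have "(\<Sum>b'\<in>B - {b}. pf b') \<in> nat_comb (set fs)"
      by (rule nat_comb_sum[OF fs(2) fB pfF]) blast
    moreover have "q \<in> nat_comb (set fs)" using bq(2) fs(1) by simp
    ultimately have "(\<Sum>b'\<in>B - {b}. pf b') + q \<in> nat_comb (set fs)" by (rule nat_comb_add[OF fs(2)])
    hence "(\<Sum>b'\<in>B - {b}. pf b') + q \<in> nat_comb F" using fs(1) by simp
    thus "z \<in> S" using pf bq(1) unfolding z by blast
  qed
qed


end
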